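(* Fix a problem instance $x$. Suppose the domain $\mathcal{A}\times\mathcal{W}$ is partitioned into $N$ connected sets $R_{x,1},\dots,R_{x,N}$ and that for each $i\in[N]$ there is a constant $c_{x,i}$ with $f_x(\alpha,w)=c_{x,i}$ for all $(\alpha,w)\in R_{x,i}$. Then there are $O(N)$ points $\alpha_{\min}=\alpha_0<\alpha_1<\dots<\alpha_t=\alpha_{\max}$, $t=O(N)$, such that the dual utility function $u^*_x(\alpha)=\sup_{w\in\mathcal{W}}f_x(\alpha,w)$ is constant on each open interval $(\alpha_j,\alpha_{j+1})$. In particular $u^*_x$ has $O(N)$ discontinuity points and is piecewise constant with $O(N)$ pieces.
   Context: Setting: $\mathcal{X}$ is a set of problem instances, $\mathcal{A}=[\alpha_{\min},\alpha_{\max}]\subset\mathbb{R}$ is the hyperparameter domain, $\mathcal{W}=[w_{\min},w_{\max}]^d\subset\mathbb{R}^d$ is the parameter domain, and $f:\mathcal{X}\times\mathcal{A}\times\mathcal{W}\to[0,H]$. For fixed $x$, the parameter-dependent dual function is $f_x(\alpha,w):=f(x,\alpha,w)$ and the dual utility function is $u^*_x(\alpha):=\sup_{w\in\mathcal{W}}f_x(\alpha,w)$. *)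

theory Defs
  imports "HOL-Analysis.Analysis"
begin

text \<open>Parameter domain W = [wmin,wmax]^d, with R^d embedded into nat => real
  (product topology) as the functions vanishing on coordinates >= d.
  This encoding lets the dimension d be quantified inside the statement,
  so that the constant hidden in O(N) is uniform in d.\<close>
definition param_domain :: "nat \<Rightarrow> real \<Rightarrow> real \<Rightarrow> (nat \<Rightarrow> real) set" where
  "param_domain d wmin wmax =
     {w. (\<forall>i<d. wmin \<le> w i \<and> w i \<le> wmax) \<and> (\<forall>i\<ge>d. w i = 0)}"

definition dual_utility :: "(real \<Rightarrow> 'w \<Rightarrow> real) \<Rightarrow> 'w set \<Rightarrow> real \<Rightarrow> real" where
  "dual_utility fx W \<alpha> = (SUP w\<in>W. fx \<alpha> w)"

end

theory Submission
  imports Defs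
begin

lemma interval_sup_between:
  fixes S :: "real set"
  assumes S: "S \<subseteq> {lo..hi}" "is_interval S" "\<alpha> \<in> S" "\<beta> \<notin> S" "\<alpha> < \<beta>"
  shows "\<alpha> \<le> Sup S \<and> Sup S \<le> \<beta>"
proof (rule conjI)
  have bdd: "bdd_above S" by (rule bdd_above_mono[OF bdd_above_Icc S(1)])
  show "\<alpha> \<le> Sup S" by (rule cSup_upper[OF S(3) bdd])
  have ub: "x \<le> \<beta>" if x: "x \<in> S" for x
  proof (rule ccontr)
    assume "\<not> x \<le> \<beta>"
    then have "\<alpha> \<le> \<beta> \<and> \<beta> \<le> x" using S(5) by linarith
    then have "\<beta> \<in> S" using S(2) S(3) x unfolding is_interval_1 by blast
    then show False using S(4) by blast
  qed
  have ne: "S \<noteq> {}" using S(3) by blast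
  show "Sup S \<le> \<beta>" by (rule cSup_least[OF ne ub])
qed

lemma interval_inf_between:
  fixes S :: "real set"
  assumes S: "S \<subseteq> {lo..hi}" "is_interval S" "\<alpha> \<in> S" "\<beta> \<notin> S" "\<beta> < \<alpha>"
  shows "\<beta> \<le> Inf S \<and> Inf S \<le> \<alpha>"
proof (rule conjI)
  have bdd: "bdd_below S" by (rule bdd_below_mono[OF bdd_below_Icc S(1)])
  show "Inf S \<le> \<alpha>" by (rule cInf_lower[OF S(3) bdd])
  have lb: "\<beta> \<le> x" if x: "x \<in> S" for x
  proof (rule ccontr)
    assume "\<not> \<beta> \<le> x"
    then have "x \<le> \<beta> \<and> \<beta> \<le> \<alpha>" using S(5) by linarith
    then have "\<beta> \<in> S" using S(2) S(3) x unfolding is_interval_1 by blast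
    then show False using S(4) by blast
  qed
  have ne: "S \<noteq> {}" using S(3) by blast
  show "\<beta> \<le> Inf S" by (rule cInf_greatest[OF ne lb])
qed

lemma Sup_in:
  assumes "S \<noteq> {}" "S \<subseteq> {lo..(hi::real)}"
  shows "Sup S \<in> {lo..hi}"
proof -
  have bdd: "bdd_above S" by (rule bdd_above_mono[OF bdd_above_Icc assms(2)])
  obtain x where x: "x \<in> S" using assms(1) by blast
  have "lo \<le> x" using x assms(2) by auto
  also have "x \<le> Sup S" by (rule cSup_upper[OF x bdd])
  finally have 1: "lo \<le> Sup S" .
  have "\<forall>y\<in>S. y \<le> hi" using assms(2) by auto
  then have 2: "Sup S \<le> hi" using assms(1) cSup_least by blast
  show ?thesis using 1 2 by simp
qed

lemma Inf_in:
  assumes "S \<noteq> {}" "S \<subseteq> {lo..(hi::real)}"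
  shows "Inf S \<in> {lo..hi}"
proof -
  have bdd: "bdd_below S" by (rule bdd_below_mono[OF bdd_below_Icc assms(2)])
  obtain x where x: "x \<in> S" using assms(1) by blast
  have "Inf S \<le> x" by (rule cInf_lower[OF x bdd])
  also have "x \<le> hi" using x assms(2) by auto
  finally have 1: "Inf S \<le> hi" .
  have "\<forall>y\<in>S. lo \<le> y" using assms(2) by auto
  then have 2: "lo \<le> Inf S" using assms(1) cInf_greatest by blast
  show ?thesis using 1 2 by simp
qed

theorem mainTheorem4:
  "\<exists>C::real. C > 0 \<and>
    (\<forall>(d::nat) (amin::real) amax (wmin::real) wmax (H::real)
       (fx :: real \<Rightarrow> (nat \<Rightarrow> real) \<Rightarrow> real) (N::nat)
       (R :: nat \<Rightarrow> (real \<times> (nat \<Rightarrow> real)) set) (c :: nat \<Rightarrow> real).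
       amin \<le> amax \<longrightarrow> wmin \<le> wmax \<longrightarrow>
       (\<forall>\<alpha>\<in>{amin..amax}. \<forall>w\<in>param_domain d wmin wmax. 0 \<le> fx \<alpha> w \<and> fx \<alpha> w \<le> H) \<longrightarrow>
       (\<Union>i<N. R i) = {amin..amax} \<times> param_domain d wmin wmax \<longrightarrow>
       (\<forall>i<N. \<forall>j<N. i \<noteq> j \<longrightarrow> R i \<inter> R j = {}) \<longrightarrow>
       (\<forall>i<N. R i \<noteq> {} \<and> connected (R i)) \<longrightarrow>
       (\<forall>i<N. \<forall>(\<alpha>, w)\<in>R i. fx \<alpha> w = c i) \<longrightarrow>
       (\<exists>(t::nat) (a :: nat \<Rightarrow> real).
          real t \<le> C * real N \<and>
          a 0 = amin \<and> a t = amax \<and>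
          (\<forall>j<t. a j < a (Suc j)) \<and>
          (\<forall>j<t. \<exists>v. \<forall>\<alpha>\<in>{a j<..<a (Suc j)}.
               dual_utility fx (param_domain d wmin wmax) \<alpha> = v)))"
proof (rule exI[of _ 3], intro conjI, simp, intro allI impI)
  fix d amin amax wmin wmax H N c
  fix fx :: "real \<Rightarrow> (nat \<Rightarrow> real) \<Rightarrow> real"
  fix R :: "nat \<Rightarrow> (real \<times> (nat \<Rightarrow> real)) set"
  assume le: "amin \<le> (amax::real)" and wle: "wmin \<le> (wmax::real)"
    and bnd: "\<forall>\<alpha>\<in>{amin..amax}. \<forall>w\<in>param_domain d wmin wmax. 0 \<le> fx \<alpha> w \<and> fx \<alpha> w \<le> H"
    and cover: "(\<Union>i<N. R i) = {amin..amax} \<times> param_domain d wmin wmax"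
    and disj: "\<forall>i<N. \<forall>j<N. i \<noteq> j \<longrightarrow> R i \<inter> R j = {}"
    and conn: "\<forall>i<N. R i \<noteq> {} \<and> connected (R i)"
    and cst: "\<forall>i<N. \<forall>(\<alpha>, w)\<in>R i. fx \<alpha> w = c i"
  define W where "W = param_domain d wmin wmax"
  define P where "P i = fst ` R i" for i
  have Psub: "P i \<subseteq> {amin..amax}" if "i < N" for i
    using cover that unfolding P_def by fastforce
  have Pne: "P i \<noteq> {}" if "i < N" for i using conn that unfolding P_def by auto
  have Pint: "is_interval (P i)" if "i < N" for i
  proof -
    have "connected (P i)" unfolding P_def
      by (rule connected_continuous_image) (use conn that in \<open>auto intro: continuous_intros\<close>)
    then show ?thesis by (simp add: is_interval_connected_1)
  qed
  define E where "E = ({amin, amax} \<union> (\<Union>i<N. {Inf (P i), Sup (P i)})) \<inter> {amin..amax}"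
  have finE: "finite E" unfolding E_def by auto
  have Esub: "E \<subseteq> {amin..amax}" unfolding E_def by auto
  have aminE: "amin \<in> E" and amaxE: "amax \<in> E" unfolding E_def using le by auto
  have SupE: "Sup (P i) \<in> E" "Inf (P i) \<in> E" if "i < N" for i
    unfolding E_def using Sup_in[OF Pne[OF that] Psub[OF that]] Inf_in[OF Pne[OF that] Psub[OF that]] that
    by auto
  have wW: "(\<lambda>i. if i < d then wmin else 0) \<in> W" unfolding W_def param_domain_def using wle by auto
  have N1: "N \<ge> 1"
  proof (rule ccontr)
    assume "\<not> N \<ge> 1" then have "N = 0" by simp
    have "(amin, (\<lambda>i. if i < d then wmin else 0)) \<in> {amin..amax} \<times> W" using wW le by simp
    moreover have "(\<Union>i<N. R i) = {}" using \<open>N = 0\<close> by simp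
    ultimately show False using cover unfolding W_def by blast
  qed
  have cardE: "card E \<le> 2 * N + 2"
  proof -
    have c1: "card E \<le> card ({amin, amax} \<union> (\<Union>i<N. {Inf (P i), Sup (P i)}))"
      unfolding E_def by (rule card_mono) auto
    have c2: "card ({amin, amax} \<union> (\<Union>i<N. {Inf (P i), Sup (P i)})) \<le> card {amin, amax} + card (\<Union>i<N. {Inf (P i), Sup (P i)})"
      by (rule card_Un_le)
    have c3: "card (\<Union>i<N. {Inf (P i), Sup (P i)}) \<le> (\<Sum>i<N. card {Inf (P i), Sup (P i)})"
      by (rule card_UN_le) auto
    have c4: "(\<Sum>i<N. card {Inf (P i), Sup (P i)}) \<le> (\<Sum>i<(N::nat). 2::nat)"
      by (rule sum_mono) (simp add: card_insert_le_m1)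
    have c5: "card {amin, amax} \<le> 2" by (simp add: card_insert_le_m1)
    have c6: "(\<Sum>i<(N::nat). 2::nat) = 2 * N" by simp
    show ?thesis using c1 c2 c3 c4 c5 c6 by linarith
  qed
  define xs where "xs = sorted_list_of_set E"
  have setxs: "set xs = E" unfolding xs_def using finE by (simp add: set_sorted_list_of_set)
  have lenxs: "length xs = card E" unfolding xs_def by (simp add: length_sorted_list_of_set)
  have sxs: "sorted_wrt (<) xs" unfolding xs_def by (simp add: strict_sorted_list_of_set)
  have "E \<noteq> {}" using aminE by blast
  then have "card E > 0" using finE by (simp add: card_gt_0_iff)
  then have cpos: "card E \<ge> 1" by simp
  define t where "t = card E - 1"
  define a where "a j = xs ! j" for j
  have mono: "a j < a k" if "j < k" "k \<le> t" for j k
    using sxs that cpos unfolding a_def t_def lenxs[symmetric]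
    by (simp add: sorted_wrt_nth_less)
  have monole: "a j \<le> a k" if "j \<le> k" "k \<le> t" for j k
    using mono[of j k] that by (cases "j = k") auto
  have inE: "a k \<in> E" if "k \<le> t" for k
  proof -
    have "k < length xs" using that cpos lenxs unfolding t_def by linarith
    then have "xs ! k \<in> set xs" by (rule nth_mem)
    then show ?thesis using setxs unfolding a_def by simp
  qed
  have Eenum: "\<exists>k\<le>t. e = a k" if "e \<in> E" for e
  proof -
    have "e \<in> set xs" using that setxs by simp
    then obtain k where k: "k < length xs" "xs ! k = e" unfolding in_set_conv_nth by blast
    then have "k \<le> t" using lenxs unfolding t_def by linarith
    then show ?thesis using k unfolding a_def by auto
  qed
  have Ebnd: "amin \<le> e \<and> e \<le> amax" if "e \<in> E" for e
    using Esub that by (meson atLeastAtMost_iff subsetD)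
  have a0: "a 0 = amin"
  proof -
    obtain k where k: "k \<le> t" "amin = a k" using Eenum aminE by blast
    have 1: "a 0 \<le> a k" using monole[OF le0 k(1)] .
    have 2: "amin \<le> a 0" using Ebnd[OF inE[OF le0]] by (rule conjunct1)
    show ?thesis using 1 2 k(2) by linarith
  qed
  have at: "a t = amax"
  proof -
    obtain k where k: "k \<le> t" "amax = a k" using Eenum amaxE by blast
    have 1: "a k \<le> a t" using monole[OF k(1) order_refl] .
    have 2: "a t \<le> amax" using Ebnd[OF inE[OF order_refl]] by (rule conjunct2)
    show ?thesis using 1 2 k(2) by linarith
  qed
  have gap: "e \<notin> {a j<..<a (Suc j)}" if jt: "j < t" and eE: "e \<in> E" for j e
  proof (rule notI)
    assume "e \<in> {a j<..<a (Suc j)}"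
    then have e1: "a j < e" and e2: "e < a (Suc j)" by auto
    obtain k where k: "k \<le> t" "e = a k" using Eenum[OF eE] by blast
    show False
    proof (cases "k \<le> j")
      case True
      have "j \<le> t" using jt by simp
      then have "a k \<le> a j" using monole[OF True] by blast
      then show ?thesis using k(2) e1 by linarith
    next
      case False then have "Suc j \<le> k" by simp
      then have "a (Suc j) \<le> a k" using monole[OF _ k(1)] by blast
      then show ?thesis using k(2) e2 by linarith
    qed
  qed
  have img: "fx \<alpha> ` W = c ` {i. i < N \<and> \<alpha> \<in> P i}" if "\<alpha> \<in> {amin..amax}" for \<alpha>
  proof
    show "fx \<alpha> ` W \<subseteq> c ` {i. i < N \<and> \<alpha> \<in> P i}"
    proof
      fix y assume "y \<in> fx \<alpha> ` W"
      then obtain w where w: "w \<in> W" "y = fx \<alpha> w" by auto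
      then have "(\<alpha>, w) \<in> (\<Union>i<N. R i)" using cover that unfolding W_def by auto
      then obtain i where i: "i < N" "(\<alpha>, w) \<in> R i" by auto
      then have "y = c i" using cst w by fastforce
      moreover have "\<alpha> \<in> P i" using i unfolding P_def by force
      ultimately show "y \<in> c ` {i. i < N \<and> \<alpha> \<in> P i}" using i by auto
    qed
    show "c ` {i. i < N \<and> \<alpha> \<in> P i} \<subseteq> fx \<alpha> ` W"
    proof
      fix y assume "y \<in> c ` {i. i < N \<and> \<alpha> \<in> P i}"
      then obtain i where i: "i < N" "\<alpha> \<in> P i" "y = c i" by auto
      then obtain w where w: "(\<alpha>, w) \<in> R i" unfolding P_def by force
      then have "w \<in> W" using cover i unfolding W_def by blast
      moreover have "fx \<alpha> w = c i" using cst w i by fastforce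
      ultimately show "y \<in> fx \<alpha> ` W" using i by force
    qed
  qed
  have memb: "\<alpha> \<in> P i \<longleftrightarrow> \<beta> \<in> P i"
    if j: "j < t" and ab: "\<alpha> \<in> {a j<..<a (Suc j)}" "\<beta> \<in> {a j<..<a (Suc j)}" and i: "i < N" for j \<alpha> \<beta> i
  proof -
    have key: False if x: "x \<in> {a j<..<a (Suc j)}" "y \<in> {a j<..<a (Suc j)}" "x \<in> P i" "y \<notin> P i" for x y
    proof (cases "x < y")
      case True
      then have "x \<le> Sup (P i) \<and> Sup (P i) \<le> y"
        using interval_sup_between[OF Psub[OF i] Pint[OF i] x(3) x(4)] by blast
      then have "Sup (P i) \<in> {a j<..<a (Suc j)}" using x(1,2) by auto
      then show False using gap[OF j SupE(1)[OF i]] by simp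
    next
      case False
      then have "y < x" using x by (cases "x = y") auto
      then have "y \<le> Inf (P i) \<and> Inf (P i) \<le> x"
        using interval_inf_between[OF Psub[OF i] Pint[OF i] x(3) x(4)] by blast
      then have "Inf (P i) \<in> {a j<..<a (Suc j)}" using x(1,2) by auto
      then show False using gap[OF j SupE(2)[OF i]] by simp
    qed
    show ?thesis using key[OF ab(1) ab(2)] key[OF ab(2) ab(1)] by blast
  qed
  show "\<exists>t a. real t \<le> 3 * real N \<and> a 0 = amin \<and> a t = amax \<and> (\<forall>j<t. a j < a (Suc j)) \<and>
          (\<forall>j<t. \<exists>v. \<forall>\<alpha>\<in>{a j<..<a (Suc j)}. dual_utility fx (param_domain d wmin wmax) \<alpha> = v)"
  proof (intro exI conjI)
    show "real t \<le> 3 * real N" using cardE N1 unfolding t_def by linarith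
    show "a 0 = amin" by (rule a0)
    show "a t = amax" by (rule at)
    show "\<forall>j<t. a j < a (Suc j)" using mono by simp
    show "\<forall>j<t. \<exists>v. \<forall>\<alpha>\<in>{a j<..<a (Suc j)}. dual_utility fx (param_domain d wmin wmax) \<alpha> = v"
    proof (intro allI impI)
    fix j assume j: "j < t"
    have sub: "{a j<..<a (Suc j)} \<subseteq> {amin..amax}"
      using inE[of j] inE[of "Suc j"] j Esub by fastforce
    show "\<exists>v. \<forall>\<alpha>\<in>{a j<..<a (Suc j)}. dual_utility fx (param_domain d wmin wmax) \<alpha> = v"
    proof (cases "{a j<..<a (Suc j)} = {}")
      case True then show ?thesis by auto
    next
      case False
      then obtain \<beta> where b: "\<beta> \<in> {a j<..<a (Suc j)}" by blast
      show ?thesis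
      proof (rule exI[of _ "dual_utility fx W \<beta>"], intro ballI)
        fix \<alpha> assume al: "\<alpha> \<in> {a j<..<a (Suc j)}"
        have "{i. i < N \<and> \<alpha> \<in> P i} = {i. i < N \<and> \<beta> \<in> P i}"
          using memb[OF j al b] by auto
        moreover have "\<alpha> \<in> {amin..amax}" "\<beta> \<in> {amin..amax}" using sub al b by blast+
        ultimately have "fx \<alpha> ` W = fx \<beta> ` W" using img by presburger
        then show "dual_utility fx (param_domain d wmin wmax) \<alpha> = dual_utility fx W \<beta>"
          unfolding dual_utility_def W_def by simp
      qed
    qed
    qed
  qed
qed

end
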